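(* If $X$ is a Baire space with a locally countable $\pi$-base, then \textsc{Bob} has a winning strategy in the game $\mathsf{BM}_\omega(X)$.
   Context: A Baire space is a space in which countable intersections of dense open sets are dense. A family $\mathcal{B}$ of non-empty open sets of $X$ is a $\pi$-base if every non-empty open set of $X$ contains a member of $\mathcal{B}$; it is locally countable if each member of $\mathcal{B}$ contains only countably many members of $\mathcal{B}$. The game $\mathsf{BM}_\omega(X)$: \textsc{Alice} plays a non-empty open set $A_0$; \textsc{Bob} plays a countable collection $\mathcal{B}_0$ of non-empty open subsets of $A_0$; in inning $n+1$, for each $B \in \mathcal{B}_n$ \textsc{Alice} plays a non-empty open set $A_B \subseteq B$, letting $\mathcal{A}_{n+1}=\{A_B : B\in\mathcal{B}_n\}$, and \textsc{Bob} plays a countable collection $\mathcal{B}_{n+1}$ of non-empty open subsets of $\bigcup\mathcal{A}_{n+1}$. \textsc{Bob} wins if $\bigcap_{n}\bigcup\mathcal{B}_n\neq\emptyset$, otherwise \textsc{Alice} wins. *)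

theory Defs
  imports "HOL-Analysis.Analysis"
begin

text \<open>The space X is the whole type 'a with its topology (class topological_space).\<close>

definition baire_space :: "'a::topological_space itself \<Rightarrow> bool" where
  "baire_space _ \<longleftrightarrow>
     (\<forall>\<F> :: 'a set set. countable \<F> \<and> (\<forall>U\<in>\<F>. open U \<and> closure U = UNIV)
        \<longrightarrow> closure (\<Inter>\<F>) = UNIV)"

definition pi_base :: "'a::topological_space set set \<Rightarrow> bool" where
  "pi_base \<B> \<longleftrightarrow> (\<forall>B\<in>\<B>. open B \<and> B \<noteq> {}) \<and>
     (\<forall>U. open U \<and> U \<noteq> {} \<longrightarrow> (\<exists>B\<in>\<B>. B \<subseteq> U))"

definition locally_countable :: "'a set set \<Rightarrow> bool" where
  "locally_countable \<B> \<longleftrightarrow> (\<forall>B\<in>\<B>. countable {C\<in>\<B>. C \<subseteq> B})"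

text \<open>A strategy for Bob in BM_omega(X): given Alice's initial move A0 and the list
  [f_0, ..., f_(n-1)] of Alice's later moves, it returns Bob's collection B_n.
  Alice's move in inning n+1 is a function f_n assigning to each B in B_n the set A_B = f_n B
  (values outside B_n are irrelevant).\<close>

type_synonym 'a bob_strategy = "'a set \<Rightarrow> ('a set \<Rightarrow> 'a set) list \<Rightarrow> 'a set set"

definition bob_move :: "'a bob_strategy \<Rightarrow> 'a set \<Rightarrow> (nat \<Rightarrow> 'a set \<Rightarrow> 'a set) \<Rightarrow> nat \<Rightarrow> 'a set set" where
  "bob_move \<sigma> A0 f n = \<sigma> A0 (map f [0..<n])"

definition alice_legal :: "'a::topological_space bob_strategy \<Rightarrow> 'a set \<Rightarrow> (nat \<Rightarrow> 'a set \<Rightarrow> 'a set) \<Rightarrow> nat \<Rightarrow> bool" where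
  "alice_legal \<sigma> A0 f n \<longleftrightarrow>
     (\<forall>B\<in>bob_move \<sigma> A0 f n. open (f n B) \<and> f n B \<noteq> {} \<and> f n B \<subseteq> B)"

definition bob_legal :: "'a::topological_space bob_strategy \<Rightarrow> 'a set \<Rightarrow> (nat \<Rightarrow> 'a set \<Rightarrow> 'a set) \<Rightarrow> nat \<Rightarrow> bool" where
  "bob_legal \<sigma> A0 f n \<longleftrightarrow>
     countable (bob_move \<sigma> A0 f n) \<and>
     (\<forall>B\<in>bob_move \<sigma> A0 f n. open B \<and> B \<noteq> {} \<and>
        B \<subseteq> (case n of 0 \<Rightarrow> A0
                     | Suc m \<Rightarrow> \<Union> (f m ` bob_move \<sigma> A0 f m)))"

definition bob_winning_strategy :: "'a::topological_space bob_strategy \<Rightarrow> bool" where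
  "bob_winning_strategy \<sigma> \<longleftrightarrow>
     (\<forall>A0 f. open A0 \<and> A0 \<noteq> {} \<longrightarrow>
        (\<forall>n. (\<forall>k<n. alice_legal \<sigma> A0 f k) \<longrightarrow> bob_legal \<sigma> A0 f n) \<and>
        ((\<forall>n. alice_legal \<sigma> A0 f n) \<longrightarrow> (\<Inter>n. \<Union> (bob_move \<sigma> A0 f n)) \<noteq> {}))"

end

theory Submission
  imports Defs
begin

primrec bseq :: "'a set set \<Rightarrow> 'a set \<Rightarrow> (nat \<Rightarrow> 'a set \<Rightarrow> 'a set) \<Rightarrow> nat \<Rightarrow> 'a set set" where
  "bseq BB S f 0 = {C\<in>BB. C \<subseteq> S}"
| "bseq BB S f (Suc n) = {C\<in>BB. C \<subseteq> S \<and> (\<exists>B\<in>bseq BB S f n. C \<subseteq> f n B)}"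

lemma bseq_cong: "(\<And>k. k < n \<Longrightarrow> g k = f k) \<Longrightarrow> bseq BB S g n = bseq BB S f n"
  by (induction n) auto

lemma bseq_sub: "bseq BB S f n \<subseteq> {C\<in>BB. C \<subseteq> S}"
  by (cases n) auto

lemma dense_univ:
  fixes S :: "'a::topological_space set"
  assumes "\<And>W. open W \<Longrightarrow> W \<noteq> {} \<Longrightarrow> W \<inter> S \<noteq> {}"
  shows "closure S = UNIV"
proof -
  have "x \<in> closure S" for x
    unfolding closure_iff_nhds_not_empty
  proof (intro allI impI)
    fix A T assume "T \<subseteq> A" "open T" "x \<in> T"
    then have "T \<inter> S \<noteq> {}" using assms by blast
    then show "S \<inter> A \<noteq> {}" using \<open>T \<subseteq> A\<close> by blast
  qed
  then show ?thesis by blast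
qed

theorem theorem3p8:
  fixes \<B> :: "'a::topological_space set set"
  assumes "baire_space TYPE('a)"
    and "pi_base \<B>"
    and "locally_countable \<B>"
  shows "\<exists>\<sigma> :: 'a bob_strategy. bob_winning_strategy \<sigma>"
proof -
  define Bs where "Bs A0 = (SOME B. B \<in> \<B> \<and> B \<subseteq> A0)" for A0 :: "'a set"
  define \<sigma> :: "'a bob_strategy" where
    "\<sigma> A0 fs = bseq \<B> (Bs A0) (\<lambda>k. fs ! k) (length fs)" for A0 fs
  have pb1: "\<And>B. B \<in> \<B> \<Longrightarrow> open B \<and> B \<noteq> {}" using assms(2) unfolding pi_base_def by blast
  have pb2: "\<And>U. open U \<Longrightarrow> U \<noteq> {} \<Longrightarrow> \<exists>B\<in>\<B>. B \<subseteq> U" using assms(2) unfolding pi_base_def by blast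
  have bm: "bob_move \<sigma> A0 f n = bseq \<B> (Bs A0) f n" for A0 f n
    unfolding bob_move_def \<sigma>_def using bseq_cong[of n "(!) (map f [0..<n])" f] by simp
  show ?thesis
  proof (intro exI[of _ \<sigma>], unfold bob_winning_strategy_def, intro allI impI conjI)
    fix A0 :: "'a set" and f n
    assume A0: "open A0 \<and> A0 \<noteq> {}"
    have Bs: "Bs A0 \<in> \<B> \<and> Bs A0 \<subseteq> A0"
      unfolding Bs_def using pb2[of A0] A0 by (metis (mono_tags, lifting) someI_ex)
    have cnt: "countable {C\<in>\<B>. C \<subseteq> Bs A0}"
      using assms(3) Bs unfolding locally_countable_def by blast
      show "bob_legal \<sigma> A0 f n"
        unfolding bob_legal_def bm
      proof (rule conjI, rule_tac [2] ballI)
        show "countable (bseq \<B> (Bs A0) f n)" using cnt bseq_sub countable_subset by metis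
      next
        fix B assume B: "B \<in> bseq \<B> (Bs A0) f n"
        then show "open B \<and> B \<noteq> {} \<and> B \<subseteq> (case n of 0 \<Rightarrow> A0
                     | Suc m \<Rightarrow> \<Union> (f m ` bseq \<B> (Bs A0) f m))"
          using Bs pb1 bseq_sub[of \<B> "Bs A0" f n]
          by (cases n) auto
      qed
  next
    fix A0 :: "'a set" and f
    assume A0: "open A0 \<and> A0 \<noteq> {}"
    assume AL: "\<forall>n. alice_legal \<sigma> A0 f n"
    have Bs: "Bs A0 \<in> \<B> \<and> Bs A0 \<subseteq> A0"
      unfolding Bs_def using pb2[of A0] A0 by (metis (mono_tags, lifting) someI_ex)
    define S where "S = Bs A0"
    have S: "open S" "S \<noteq> {}" using Bs pb1 S_def by auto
    have AL': "\<And>n B. B \<in> bseq \<B> S f n \<Longrightarrow> open (f n B) \<and> f n B \<noteq> {} \<and> f n B \<subseteq> B"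
      using AL unfolding alice_legal_def bm S_def by blast
    have dens0: "\<forall>V. open V \<and> V \<noteq> {} \<and> V \<subseteq> S \<longrightarrow> (\<exists>C\<in>bseq \<B> S f n. C \<subseteq> V)" for n
    proof (induction n)
      case 0
      show ?case
      proof (intro allI impI)
        fix V :: "'a set" assume V: "open V \<and> V \<noteq> {} \<and> V \<subseteq> S"
        then obtain D where D: "D \<in> \<B>" "D \<subseteq> V" using pb2 by blast
        then have "D \<in> bseq \<B> S f 0" using V by auto
        then show "\<exists>C\<in>bseq \<B> S f 0. C \<subseteq> V" using D by blast
      qed
    next
      case (Suc n)
      show ?case
      proof (intro allI impI)
        fix V :: "'a set" assume V: "open V \<and> V \<noteq> {} \<and> V \<subseteq> S"
        obtain C where C: "C \<in> bseq \<B> S f n" "C \<subseteq> V" using Suc.IH V by blast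
        have fC: "open (f n C)" "f n C \<noteq> {}" "f n C \<subseteq> C" using AL'[OF C(1)] by auto
        obtain D where D: "D \<in> \<B>" "D \<subseteq> f n C" using pb2[OF fC(1) fC(2)] by blast
        have "C \<subseteq> S" using C(1) bseq_sub[of \<B> S f n] by blast
        then have "D \<in> bseq \<B> S f (Suc n)" using C(1) D fC(3) by auto
        moreover have "D \<subseteq> V" using D(2) fC(3) C(2) by blast
        ultimately show "\<exists>C\<in>bseq \<B> S f (Suc n). C \<subseteq> V" by blast
      qed
    qed
    have dens: "\<exists>C\<in>bseq \<B> S f n. C \<subseteq> V" if "open V" "V \<noteq> {}" "V \<subseteq> S" for V n
      using dens0[of n] that by blast
    define F where "F = range (\<lambda>n. \<Union> (bseq \<B> S f n) \<union> - closure S)"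
    have Fc: "countable F" unfolding F_def by simp
    have Fo: "\<forall>U\<in>F. open U \<and> closure U = UNIV"
    proof
      fix U assume "U \<in> F"
      then obtain n where U: "U = \<Union> (bseq \<B> S f n) \<union> - closure S" unfolding F_def by blast
      have "\<forall>C\<in>bseq \<B> S f n. open C" using bseq_sub[of \<B> S f n] pb1 by blast
      then have "open U" unfolding U by (intro open_Un open_Union) auto
      moreover have "closure U = UNIV"
      proof (rule dense_univ)
        fix W :: "'a set" assume W: "open W" "W \<noteq> {}"
        show "W \<inter> U \<noteq> {}"
        proof (cases "W \<inter> - closure S = {}")
          case True
          then have "W \<subseteq> closure S" by blast
          then have "W \<inter> S \<noteq> {}" using W open_Int_closure_eq_empty[of W S] by blast
          then obtain C where "C \<in> bseq \<B> S f n" "C \<subseteq> W \<inter> S"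
            using dens[of "W \<inter> S" n] W S by blast
          moreover have "C \<noteq> {}" using calculation(1) bseq_sub[of \<B> S f n] pb1 by auto
          ultimately show ?thesis unfolding U by blast
        next
          case False then show ?thesis unfolding U by blast
        qed
      qed
      ultimately show "open U \<and> closure U = UNIV" by blast
    qed
    have "closure (\<Inter>F) = UNIV" using assms(1) Fc Fo unfolding baire_space_def by blast
    then have "S \<inter> \<Inter>F \<noteq> {}" using S open_Int_closure_eq_empty[of S "\<Inter>F"] by auto
    then obtain x where x: "x \<in> S" "x \<in> \<Inter>F" by blast
    have "x \<in> \<Union> (bseq \<B> S f n)" for n
      using x closure_subset[of S] unfolding F_def by blast
    then show "(\<Inter>n. \<Union> (bob_move \<sigma> A0 f n)) \<noteq> {}" unfolding bm S_def by blast
  qed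
qed

end
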